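(* Let $k$ be a field of characteristic $0$, let $t$ be transcendental over $k$, and let $K=k(t)$. Let $\alpha,a,b,c,d,e,f\in k$ with $a,d$ not both zero, $ae=bd$, $af\neq cd$, $b^2\neq 4ac$ and $e^2\neq 4df$. Let $\lambda\in\operatorname{Emb}(k(t))$ be a $k$-linear embedding with $\lambda(t)=\alpha+\sqrt{\frac{at^2+bt+c}{dt^2+et+f}}$ (for some square root in $\overline{K}$). If $V$ is a simple two-sided vector space over $k(t)$ corresponding to $\lambda$, then $V$ has rank $2$.
   Context: Let $k\subset K$ be fields and $\overline{K}$ a fixed algebraic closure of $K$. A two-sided vector space is a $K\otimes_k K$-module $V$; left (resp. right) multiplication by $K$ means the action of $K\otimes 1$ (resp. $1\otimes K$); ${}_KV$ and $V_K$ denote the corresponding restrictions of scalars. $V$ has rank $n$ if $\dim_K({}_KV)=\dim_K(V_K)=n$. $\operatorname{Emb}(K)$ is the set of $k$-linear field embeddings $K\to\overline{K}$; $G=\operatorname{Aut}(\overline{K}/K)$ acts on it by left composition, and $\lambda^G$ denotes the orbit. For a homomorphism $\phi:K\to M_n(K)$, $K^n_\phi$ denotes the two-sided vector space of row vectors $K^n$ with left action $x\cdot(v_1,\dots,v_n)=(xv_1,\dots,xv_n)$ and right action $v\cdot x=v\phi(x)$. For $K$ perfect and $\lambda\in\operatorname{Emb}(K)$ with $|\lambda^G|=n<\infty$, let $K(\lambda)\subset\overline{K}$ be the composite of $K$ and $\lambda(K)$ (it has $[K(\lambda):K]=n$), choose a basis $\alpha_1,\dots,\alpha_n$ of $K(\lambda)$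 over $K$, define $\lambda_i:K\to K$ by $\lambda(x)=\sum_i\lambda_i(x)\alpha_i$, define $\beta_{ijk}\in K$ by $\alpha_i\alpha_j=\sum_k\beta_{ijk}\alpha_k$, and set $\phi_{ij}(x)=\sum_{k}\beta_{jki}\lambda_k(x)$. The simple two-sided vector space corresponding to $\lambda$ is (up to isomorphism) $K^n_\phi$; by a known classification, $\lambda^G\mapsto K^n_\phi$ is a bijection from finite $G$-orbits in $\operatorname{Emb}(K)$ to isomorphism classes of simple two-sided vector spaces of finite left dimension, and this space has left dimension $|\lambda^G|$. *)

theory Defs
  imports "HOL-Analysis.Analysis" "HOL-Computational_Algebra.Fraction_Field"
begin

type_synonym 'k ratfun = "'k poly fract"

definition rf_const :: "'k::field \<Rightarrow> 'k ratfun" where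
  "rf_const c = Fract [:c:] 1"

definition rf_t :: "'k::field ratfun" where
  "rf_t = Fract [:0, 1:] 1"

text \<open>(Unital) ring homomorphisms between fields; these are automatically injective.\<close>
definition is_ring_hom :: "('a::ring_1 \<Rightarrow> 'b::ring_1) \<Rightarrow> bool" where
  "is_ring_hom f \<longleftrightarrow> f 1 = 1 \<and> (\<forall>x y. f (x + y) = f x + f y) \<and> (\<forall>x y. f (x * y) = f x * f y)"

definition is_alg_closure :: "('K::field \<Rightarrow> 'L::field) \<Rightarrow> bool" where
  "is_alg_closure \<iota> \<longleftrightarrow> is_ring_hom \<iota>
     \<and> (\<forall>p :: 'L poly. 0 < degree p \<longrightarrow> (\<exists>z. poly p z = 0))
     \<and> (\<forall>z :: 'L. \<exists>p. p \<noteq> 0 \<and> (\<forall>i. coeff p i \<in> range \<iota>) \<and> poly p z = 0)"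

definition Aut_over :: "('K::field \<Rightarrow> 'L::field) \<Rightarrow> ('L \<Rightarrow> 'L) set" where
  "Aut_over \<iota> = {\<sigma>. bij \<sigma> \<and> is_ring_hom \<sigma> \<and> (\<forall>x. \<sigma> (\<iota> x) = \<iota> x)}"

definition Emb :: "('k::field ratfun \<Rightarrow> 'L::field) \<Rightarrow> ('k ratfun \<Rightarrow> 'L) set" where
  "Emb \<iota> = {\<mu>. is_ring_hom \<mu> \<and> (\<forall>c x. \<mu> (rf_const c * x) = \<iota> (rf_const c) * \<mu> x)}"

definition orbit :: "('K::field \<Rightarrow> 'L::field) \<Rightarrow> ('K \<Rightarrow> 'L) \<Rightarrow> ('K \<Rightarrow> 'L) set" where
  "orbit \<iota> \<mu> = {\<sigma> \<circ> \<mu> | \<sigma>. \<sigma> \<in> Aut_over \<iota>}"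

definition is_subfield :: "'L::field set \<Rightarrow> bool" where
  "is_subfield F \<longleftrightarrow> 0 \<in> F \<and> 1 \<in> F \<and> (\<forall>x\<in>F. \<forall>y\<in>F. x + y \<in> F \<and> x * y \<in> F)
     \<and> (\<forall>x\<in>F. - x \<in> F) \<and> (\<forall>x\<in>F. x \<noteq> 0 \<longrightarrow> inverse x \<in> F)"

definition composite :: "('K::field \<Rightarrow> 'L::field) \<Rightarrow> ('K \<Rightarrow> 'L) \<Rightarrow> 'L set" where
  "composite \<iota> \<mu> = \<Inter>{F. is_subfield F \<and> range \<iota> \<subseteq> F \<and> range \<mu> \<subseteq> F}"

definition phi_mat :: "('n::finite \<Rightarrow> 'n \<Rightarrow> 'n \<Rightarrow> 'K::field) \<Rightarrow> ('n \<Rightarrow> 'K \<Rightarrow> 'K) \<Rightarrow> 'K \<Rightarrow> 'K ^ 'n ^ 'n" where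
  "phi_mat \<beta> lc x = (\<chi> i j. \<Sum>k\<in>UNIV. \<beta> j k i * lc k x)"

definition left_dim :: "('K::field \<Rightarrow> 'K ^ 'n ^ 'n) \<Rightarrow> nat" where
  "left_dim \<phi> = vector_space.dim (\<lambda>x (v :: 'K ^ 'n::finite). x *s v) UNIV"

definition right_dim :: "('K::field \<Rightarrow> 'K ^ 'n ^ 'n) \<Rightarrow> nat" where
  "right_dim \<phi> = vector_space.dim (\<lambda>x (v :: 'K ^ 'n::finite). vector_matrix_mult v (\<phi> x)) UNIV"

end

theory Submission
  imports Defs
begin


definition bez :: "'k::field poly \<Rightarrow> 'k poly \<Rightarrow> bool" where
  "bez A C \<longleftrightarrow> (\<exists>u v. u * A + v * C = 1)"

lemma bez_sym: "bez A C \<Longrightarrow> bez C A"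
  unfolding bez_def by (metis add.commute)

lemma bez_mult: "bez A C \<Longrightarrow> bez B C \<Longrightarrow> bez (A * B) C"
proof -
  assume "bez A C" "bez B C"
  then obtain u1 v1 u2 v2 where e: "u1 * A + v1 * C = 1" "u2 * B + v2 * C = 1" unfolding bez_def by blast
  have "(u1 * u2) * (A * B) + (u1 * A * v2 + v1 * (u2 * B) + v1 * v2 * C) * C = (u1 * A + v1 * C) * (u2 * B+v2 * C)"
    by (simp add: algebra_simps)
  thus ?thesis using e unfolding bez_def by auto
qed

lemma bez_dvd: "bez A C \<Longrightarrow> A dvd B * C \<Longrightarrow> A dvd B"
proof -
  assume "bez A C" "A dvd B * C"
  then obtain u v k where e: "u * A + v * C = 1" "B * C = A * k" unfolding bez_def dvd_def by blast
  have "B = B * (u * A+v * C)" using e by simp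
  also have "\<dots> = A * (B * u + v * k)" using e(2) by (simp add: algebra_simps)
  finally show ?thesis by (rule dvdI)
qed

lemma bez_add: "bez A C \<Longrightarrow> bez (A + C * X) C"
proof -
  assume "bez A C"
  then obtain u v where e: "u * A + v * C = 1" unfolding bez_def by blast
  have "u * (A + C * X) + (v - u * X) * C = u * A + v * C" by (simp add: algebra_simps)
  thus ?thesis using e unfolding bez_def by metis
qed

lemma bez_smult: "bez A C \<Longrightarrow> d \<noteq> 0 \<Longrightarrow> bez (smult d A) C"
proof -
  assume "bez A C" "d \<noteq> 0"
  then obtain u v where e: "u * A + v * C = 1" unfolding bez_def by blast
  have "smult (inverse d) u * smult d A + v * C = u * A + v * C" using \<open>d \<noteq> 0\<close> by simp
  thus ?thesis using e unfolding bez_def by metis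
qed

lemma dvd_one_degree: "(A::'k::field poly) dvd 1 \<Longrightarrow> degree A = 0"
  by (metis degree_1 degree_mult_eq dvd_def mult_eq_0_iff one_neq_zero add_is_0)

lemma bez_exists:
  fixes P Q :: "'k::field poly"
  assumes "Q \<noteq> 0"
  shows "\<exists>g P1 Q1. P = g * P1 \<and> Q = g * Q1 \<and> bez P1 Q1"
proof -
  define I where "I = {u * P + v * Q | u v. True}"
  have QI: "Q \<in> I" unfolding I_def by (metis (mono_tags, lifting) add_0 mem_Collect_eq mult_1 mult_zero_left)
  have "\<exists>n. \<exists>g\<in>I. g \<noteq> 0 \<and> degree g = n" using QI assms by blast
  then obtain n where n: "\<exists>g\<in>I. g \<noteq> 0 \<and> degree g = n" "\<And>m. m < n \<Longrightarrow> \<not>(\<exists>g\<in>I. g \<noteq> 0 \<and> degree g = m)"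
    using exists_least_iff[of "\<lambda>n. \<exists>g\<in>I. g \<noteq> 0 \<and> degree g = n"] by blast
  then obtain g where g: "g \<in> I" "g \<noteq> 0" "degree g = n" by blast
  from g(1) obtain u v where uv: "g = u * P + v * Q" unfolding I_def by blast
  have closed: "X mod g = 0" if "X \<in> I" for X
  proof (rule ccontr)
    assume ne: "X mod g \<noteq> 0"
    from that obtain u' v' where X: "X = u' * P + v' * Q" unfolding I_def by blast
    have "X mod g = X - (X div g) * g" by (simp add: minus_div_mult_eq_mod)
    also have "\<dots> = (u' - (X div g) * u) * P + (v' - (X div g) * v) * Q" using X uv by (simp add: algebra_simps)
    finally have "X mod g \<in> I" unfolding I_def by blast
    moreover have "degree (X mod g) < n" using degree_mod_less[OF g(2), of X] ne g(3) by simp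
    ultimately show False using n(2) ne by blast
  qed
  have "P \<in> I" unfolding I_def by (metis (mono_tags, lifting) add_0_right mem_Collect_eq mult_1 mult_zero_left)
  hence "g dvd P" using closed by (simp add: mod_eq_0_iff_dvd)
  then obtain P1 where P1: "P = g * P1" by blast
  have "g dvd Q" using closed QI by (simp add: mod_eq_0_iff_dvd)
  then obtain Q1 where Q1: "Q = g * Q1" by blast
  have "g * (u * P1 + v * Q1) = g * 1" using uv P1 Q1 by (simp add: algebra_simps)
  hence "u * P1 + v * Q1 = 1" using g(2) by simp
  thus ?thesis using P1 Q1 unfolding bez_def by blast
qed

lemma deg1_poly: "degree (p::'a::zero poly) \<le> 1 \<Longrightarrow> p = [:coeff p 0, coeff p 1:]"
  by (auto simp: poly_eq_iff coeff_pCons split: nat.splits intro: coeff_eq_0)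

lemma bez_sq: "bez P Q \<Longrightarrow> bez (P * P) (Q * Q)"
  by (meson bez_mult bez_sym)

lemma not_square_poly:
  fixes a b c d e f :: "'k::field"
  assumes a: "a \<noteq> 0" and d: "d \<noteq> 0" and h2: "a * f \<noteq> c * d" and h3: "b^2 \<noteq> 4 * a * c"
    and cop: "bez P Q" and Q: "Q \<noteq> 0"
    and eq: "P * P * [:f,e,d:] = [:c,b,a:] * (Q * Q)"
  shows False
proof -
  define N where "N = [:c,b,a:]"
  define D where "D = [:f,e,d:]"
  have N0: "N \<noteq> 0" and D0: "D \<noteq> 0" using a d by (auto simp: N_def D_def)
  have degN: "degree N = 2" and degD: "degree D = 2" using a d by (auto simp: N_def D_def)
  have cop2: "bez (P * P) (Q * Q)" using cop by (rule bez_sq)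
  have "P * P dvd N * (Q * Q)" using eq by (metis N_def D_def dvd_triv_left)
  hence "P * P dvd N" using cop2 by (rule bez_dvd[rotated])
  then obtain N' where N': "N = P * P * N'" by blast
  have "Q * Q dvd D * (P * P)" using eq by (metis N_def D_def dvd_triv_right mult.commute)
  hence "Q * Q dvd D" using bez_sym[OF cop2] by (rule bez_dvd[rotated])
  then obtain D' where D': "D = Q * Q * D'" by blast
  have P0: "P \<noteq> 0" using N' N0 by auto
  have "P * P * D = N * (Q * Q)" using eq by (simp add: N_def D_def)
  hence "P * P * (Q * Q * D') = (P * P * N') * (Q * Q)" by (simp only: N' D')
  hence "(P * P * Q * Q) * D' = (P * P * Q * Q) * N'" by (simp add: algebra_simps)
  hence DN: "D' = N'" using P0 Q by simp
  have N'0: "N' \<noteq> 0" using N' N0 by auto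
  have dN: "degree N = 2 * degree P + degree N'" using N' P0 N'0 by (simp add: degree_mult_eq)
  have dD: "degree D = 2 * degree Q + degree N'" using D' DN Q N'0 by (simp add: degree_mult_eq)
  show False
  proof (cases "degree P = 0")
    case True
    then obtain p where p: "P = [:p:]" by (auto elim: degree_eq_zeroE)
    have "degree Q = 0" using dN dD degN degD True by simp
    then obtain q where q: "Q = [:q:]" by (auto elim: degree_eq_zeroE)
    have "smult (q * q) N = smult (p * p) D" using N' D' DN p q by (simp add: algebra_simps)
    hence e1: "q * q * c = p * p * f" and e2: "q * q * a = p * p * d" by (simp_all add: N_def D_def)
    have "p \<noteq> 0" "q \<noteq> 0" using P0 Q p q by auto
    have "(q * q) * (p * p) * (a * f - c * d) = (q * q * a) * (p * p * f) - (q * q * c) * (p * p * d)" by (simp add: algebra_simps)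
    also have "\<dots> = 0" using e1 e2 by simp
    finally show False using h2 \<open>p \<noteq> 0\<close> \<open>q \<noteq> 0\<close> by simp
  next
    case False
    hence "degree P = 1" "degree N' = 0" using dN degN by auto
    then obtain n where n: "N' = [:n:]" by (auto elim: degree_eq_zeroE)
    have Pe: "P = [:coeff P 0, coeff P 1:]" using \<open>degree P = 1\<close> deg1_poly[of P] by simp
    define p0 where "p0 = coeff P 0"
    define p1 where "p1 = coeff P 1"
    have "[:c,b,a:] = [:p0,p1:] * [:p0,p1:] * [:n:]" using N' n Pe unfolding N_def p0_def p1_def by metis
    hence "c = p0 * p0 * n" "b = (p0 * p1 + p1 * p0) * n" "a = p1 * p1 * n" by (simp_all add: algebra_simps)
    hence "b^2 = 4 * a * c" by (simp add: power2_eq_square algebra_simps)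
    thus False using h3 by simp
  qed
qed

lemma not_param_poly:
  fixes a b c d e f \<alpha> :: "'k::field_char_0"
  assumes a: "a \<noteq> 0" and d: "d \<noteq> 0" and h1: "a * e = b * d" and h2: "a * f \<noteq> c * d"
    and cop: "bez P Q" and Q: "Q \<noteq> 0"
    and eq: "smult a (P * P) + smult b (P * Q) + smult c (Q * Q)
             = [:\<alpha> * \<alpha>, - (2 * \<alpha>), 1:] * (smult d (P * P) + smult e (P * Q) + smult f (Q * Q))"
  shows False
proof -
  define W where "W = [:\<alpha> * \<alpha>, - (2 * \<alpha>), 1:]"
  define Dt where "Dt = smult d (P * P) + smult e (P * Q) + smult f (Q * Q)"
  define \<gamma> where "\<gamma> = c * d - a * f"
  have g0: "\<gamma> \<noteq> 0" using h2 by (simp add: \<gamma>_def)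
  have "bez (P * P) Q" using cop by (meson bez_mult bez_sym)
  hence "bez (smult d (P * P)) Q" using d by (rule bez_smult)
  hence "bez (smult d (P * P) + Q * (smult e P + smult f Q)) Q" by (rule bez_add)
  moreover have "smult d (P * P) + Q * (smult e P + smult f Q) = Dt" by (simp add: Dt_def algebra_simps)
  ultimately have "bez Dt Q" by simp
  hence bq: "bez Dt (Q * Q)" by (meson bez_mult bez_sym)
  have key: "smult \<gamma> (Q * Q) = (smult d W - [:a:]) * Dt"
  proof -
    have "smult \<gamma> (Q * Q) = smult d (smult a (P * P) + smult b (P * Q) + smult c (Q * Q)) - smult a Dt"
    proof -
      have e_eq: "e = b * d / a" using h1 a by (simp add: field_simps)
      show ?thesis using a by (simp add: e_eq poly_eq_iff Dt_def \<gamma>_def field_simps)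
    qed
    also have "\<dots> = smult d (W * Dt) - smult a Dt"
    proof -
      have eq': "smult a (P * P) + smult b (P * Q) + smult c (Q * Q) = W * Dt" unfolding W_def Dt_def using eq .
      show ?thesis by (simp only: eq')
    qed
    also have "\<dots> = (smult d W - [:a:]) * Dt" by (simp add: algebra_simps)
    finally show ?thesis .
  qed
  have "Dt dvd smult \<gamma> (Q * Q)" using key by simp
  hence "Dt dvd Q * Q" using g0 by (simp add: dvd_smult_iff)
  hence "Dt dvd 1 * (Q * Q)" by simp
  hence "Dt dvd 1" using bq by (rule bez_dvd[rotated])
  hence "degree Dt = 0" by (rule dvd_one_degree)
  then obtain u where u: "Dt = [:u:]" by (auto elim: degree_eq_zeroE)
  have u0: "u \<noteq> 0" using \<open>Dt dvd 1\<close> u by auto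
  have k2: "smult \<gamma> (Q * Q) = [:d * u * \<alpha> * \<alpha> - a * u, - (2 * d * u * \<alpha>), d * u:]"
    using key u by (simp add: W_def algebra_simps)
  have "degree (smult \<gamma> (Q * Q)) = 2" using k2 d u0 by simp
  hence "2 * degree Q = 2" using g0 Q by (simp add: degree_mult_eq)
  hence "degree Q = 1" by simp
  hence Qe: "Q = [:coeff Q 0, coeff Q 1:]" using deg1_poly[of Q] by simp
  define q0 where "q0 = coeff Q 0"
  define q1 where "q1 = coeff Q 1"
  have "smult \<gamma> ([:q0,q1:] * [:q0,q1:]) = [:d * u * \<alpha> * \<alpha> - a * u, - (2 * d * u * \<alpha>), d * u:]"
    using k2 Qe unfolding q0_def q1_def by metis
  hence E1: "\<gamma> * (q0 * q0) = d * u * \<alpha> * \<alpha> - a * u"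
    and E2: "\<gamma> * (q0 * q1 + q1 * q0) = - (2 * d * u * \<alpha>)"
    and E3: "\<gamma> * (q1 * q1) = d * u" by (simp_all add: algebra_simps)
  have "2 * (\<gamma> * q0 * q1) = 2 * (- (d * u * \<alpha>))" using E2 by (simp add: algebra_simps)
  hence E2': "\<gamma> * q0 * q1 = - (d * u * \<alpha>)" by (simp add: algebra_simps)
  have "(\<gamma> * q0 * q1) * (\<gamma> * q0 * q1) = (\<gamma> * (q0 * q0)) * (\<gamma> * (q1 * q1))" by (simp add: algebra_simps)
  hence "(d * u * \<alpha>) * (d * u * \<alpha>) = (d * u * \<alpha> * \<alpha> - a * u) * (d * u)" using E1 E2' E3 by simp
  hence "a * d * (u * u) = 0" by (simp add: algebra_simps)
  thus False using a d u0 by simp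
qed



lemma hom_0: assumes H: "is_ring_hom h" shows "h 0 = 0"
proof -
  have "h 0 = h (0 + 0)" by simp
  also have "\<dots> = h 0 + h 0" using H unfolding is_ring_hom_def by blast
  finally show ?thesis by simp
qed
lemma hom_1: "is_ring_hom h \<Longrightarrow> h 1 = 1" unfolding is_ring_hom_def by simp
lemma hom_add: "is_ring_hom h \<Longrightarrow> h (x + y) = h x + h y" unfolding is_ring_hom_def by simp
lemma hom_mult: "is_ring_hom h \<Longrightarrow> h (x * y) = h x * h y" unfolding is_ring_hom_def by simp
lemma hom_uminus: assumes H: "is_ring_hom h" shows "h (- x) = - h x"
proof -
  have "h (- x) + h x = h (- x + x)" by (rule hom_add[OF H, symmetric])
  also have "\<dots> = 0" using hom_0[OF H] by simp
  finally show ?thesis by (simp add: eq_neg_iff_add_eq_0)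
qed
lemma hom_diff: assumes H: "is_ring_hom h" shows "h (x - y) = h x - h y"
  by (simp only: diff_conv_add_uminus hom_add[OF H] hom_uminus[OF H])
lemma hom_power: "is_ring_hom h \<Longrightarrow> h (x ^ n) = h x ^ n"
  by (induction n) (simp_all add: hom_1 hom_mult)
lemma hom_inverse: assumes H: "is_ring_hom (h :: 'a::field \<Rightarrow> 'b::field)" shows "h (inverse x) = inverse (h x)"
proof (cases "x = 0")
  case True
  then show ?thesis using hom_0[OF H] by simp
next
  case False
  have "h x * h (inverse x) = h (x * inverse x)" using hom_mult[OF H] by simp
  also have "\<dots> = 1" using False hom_1[OF H] by simp
  finally show ?thesis by (rule inverse_unique[symmetric])
qed
lemma hom_divide: "is_ring_hom (h :: 'a::field \<Rightarrow> 'b::field) \<Longrightarrow> h (x / y) = h x / h y"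
  by (simp add: divide_inverse hom_mult hom_inverse)
lemma hom_eq0: assumes H: "is_ring_hom (h :: 'a::field \<Rightarrow> 'b::field)" shows "h x = 0 \<longleftrightarrow> x = 0"
proof
  assume h0: "h x = 0"
  show "x = 0"
  proof (rule ccontr)
    assume "x \<noteq> 0"
    hence "h x * h (inverse x) = 1" using hom_mult[OF H, of x "inverse x"] hom_1[OF H] by simp
    thus False using h0 by simp
  qed
qed (simp add: hom_0[OF H])
lemma hom_inj: assumes H: "is_ring_hom (h :: 'a::field \<Rightarrow> 'b::field)" shows "h x = h y \<longleftrightarrow> x = y"
proof -
  have "h x = h y \<longleftrightarrow> h (x - y) = 0" using hom_diff[OF H] by simp
  also have "\<dots> \<longleftrightarrow> x = y" using hom_eq0[OF H] by simp
  finally show ?thesis .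
qed
lemma hom_sum: "is_ring_hom h \<Longrightarrow> h (sum g A) = (\<Sum>i\<in>A. h (g i))"
  by (induction A rule: infinite_finite_induct) (simp_all add: hom_0 hom_add)

lemma subfield_range: assumes H: "is_ring_hom (h :: 'a::field \<Rightarrow> 'b::field)" shows "is_subfield (range h)"
  unfolding is_subfield_def
proof (intro conjI ballI impI)
  show "0 \<in> range h" using hom_0[OF H] by (metis rangeI)
  show "1 \<in> range h" using hom_1[OF H] by (metis rangeI)
  fix u v assume "u \<in> range h" "v \<in> range h"
  then obtain x y where "u = h x" "v = h y" by blast
  thus "u + v \<in> range h" "u * v \<in> range h" using hom_add[OF H] hom_mult[OF H] by (metis rangeI)+
next
  fix u assume "u \<in> range h"
  then obtain x where "u = h x" by blast
  thus "- u \<in> range h" "inverse u \<in> range h" using hom_uminus[OF H] hom_inverse[OF H] by (metis rangeI)+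
qed

lemma subfield_diff: "is_subfield S \<Longrightarrow> x \<in> S \<Longrightarrow> y \<in> S \<Longrightarrow> x - y \<in> S"
  unfolding is_subfield_def by (metis diff_conv_add_uminus)
lemma subfield_div: "is_subfield S \<Longrightarrow> x \<in> S \<Longrightarrow> y \<in> S \<Longrightarrow> x / y \<in> S"
  unfolding is_subfield_def by (metis divide_inverse inverse_zero)

lemma Fract_pCons: "Fract (pCons a P) 1 = rf_const a + rf_t * Fract P 1"
proof -
  have "pCons a P = [:a:] + [:0,1:] * P" by (simp add: poly_eq_iff coeff_pCons split: nat.splits)
  thus ?thesis by (simp add: rf_const_def rf_t_def mult_fract)
qed

lemma hom_in_subfield:
  assumes H: "is_ring_hom (h :: 'k::field ratfun \<Rightarrow> 'b::field)" and S: "is_subfield S"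
    and cS: "\<And>c. h (rf_const c) \<in> S" and tS: "h rf_t \<in> S"
  shows "h x \<in> S"
proof -
  have P1: "h (Fract P 1) \<in> S" for P
  proof (induction P)
    case (pCons a P)
    show ?case unfolding Fract_pCons using S cS tS pCons H
      by (simp add: hom_add hom_mult is_subfield_def)
  next
    case 0
    have "Fract 0 1 = (0::'k ratfun)" by (simp add: Zero_fract_def)
    thus ?case using S H by (simp add: is_subfield_def hom_0)
  qed
  obtain P Q where x: "x = Fract P Q" "Q \<noteq> 0" by (cases x) auto
  have xe: "x = Fract P 1 * inverse (Fract Q 1)" using x by (simp add: mult_fract)
  have hx: "h x = h (Fract P 1) * inverse (h (Fract Q 1))"
    by (subst xe) (simp only: hom_mult[OF H] hom_inverse[OF H])
  have "inverse (h (Fract Q 1)) \<in> S" using P1[of Q] S by (cases "h (Fract Q 1) = 0") (auto simp: is_subfield_def)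
  thus ?thesis unfolding hx using P1[of P] S by (simp add: is_subfield_def)
qed

lemma quad_ext:
  fixes R :: "'L::field set"
  assumes R: "is_subfield R" and A: "A \<in> R" and B: "B \<in> R" and T2: "T * T = A + B * T" and TR: "T \<notin> R"
  shows "is_subfield {x + y * T | x y. x \<in> R \<and> y \<in> R}" (is ?sf)
    and "\<lbrakk>x \<in> R; y \<in> R; x' \<in> R; y' \<in> R; x + y * T = x' + y' * T\<rbrakk> \<Longrightarrow> x = x' \<and> y = y'" (is "PROP ?un")
proof -
  note Rc = R[unfolded is_subfield_def]
  have R0: "0 \<in> R" and R1: "1 \<in> R" and Radd: "\<And>x y. x \<in> R \<Longrightarrow> y \<in> R \<Longrightarrow> x + y \<in> R"
    and Rmul: "\<And>x y. x \<in> R \<Longrightarrow> y \<in> R \<Longrightarrow> x * y \<in> R"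
    and Rneg: "\<And>x. x \<in> R \<Longrightarrow> - x \<in> R" using Rc by auto
  have Rdiff: "\<And>x y. x \<in> R \<Longrightarrow> y \<in> R \<Longrightarrow> x - y \<in> R" using subfield_diff[OF R] by blast
  have Rdiv: "\<And>x y. x \<in> R \<Longrightarrow> y \<in> R \<Longrightarrow> x / y \<in> R" using subfield_div[OF R] by blast
  show "PROP ?un"
  proof -
    assume h: "x \<in> R" "y \<in> R" "x' \<in> R" "y' \<in> R" "x + y * T = x' + y' * T"
    show "x = x' \<and> y = y'"
    proof (cases "y = y'")
      case True thus ?thesis using h by simp
    next
      case False
      have "(y - y') * T = x' - x" using h(5) by (simp add: algebra_simps)
      hence "T = (x' - x) / (y - y')" using False by (simp add: field_simps)
      hence "T \<in> R" using h Rdiff Rdiv by simp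
      thus ?thesis using TR by simp
    qed
  qed
  let ?E = "{x + y * T | x y. x \<in> R \<and> y \<in> R}"
  have mem: "x + y * T \<in> ?E" if "x \<in> R" "y \<in> R" for x y using that by blast
  show ?sf
    unfolding is_subfield_def
  proof (intro conjI ballI impI)
    show "0 \<in> ?E" using mem[OF R0 R0] by simp
    show "1 \<in> ?E" using mem[OF R1 R0] by simp
    fix u v assume u: "u \<in> ?E" and v: "v \<in> ?E"
    then obtain x y x' y' where xy: "u = x + y * T" "x \<in> R" "y \<in> R" and xy': "v = x' + y' * T" "x' \<in> R" "y' \<in> R" by blast
    have "u + v = (x + x') + (y + y') * T" using xy xy' by (simp add: algebra_simps)
    thus "u + v \<in> ?E" using xy xy' Radd by blast
    have "u * v = x * x' + (x * y' + y * x') * T + y * y' * (T * T)" using xy xy' by (simp add: algebra_simps)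
    also have "\<dots> = (x * x' + y * y' * A) + (x * y' + y * x' + y * y' * B) * T" unfolding T2 by (simp add: algebra_simps)
    finally have "u * v = (x * x' + y * y' * A) + (x * y' + y * x' + y * y' * B) * T" .
    moreover have "x * x' + y * y' * A \<in> R" "x * y' + y * x' + y * y' * B \<in> R"
      using xy xy' A B by (simp_all add: Radd Rmul)
    ultimately show "u * v \<in> ?E" using mem by simp
  next
    fix u assume u: "u \<in> ?E"
    then obtain x y where xy: "u = x + y * T" "x \<in> R" "y \<in> R" by blast
    have "- u = (- x) + (- y) * T" using xy by simp
    thus "- u \<in> ?E" using xy Rneg by blast
  next
    fix u assume u: "u \<in> ?E" and u0: "u \<noteq> 0"
    then obtain x y where xy: "u = x + y * T" "x \<in> R" "y \<in> R" by blast
    define nn where "nn = x * x + x * y * B - y * y * A"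
    have "u * ((x + y * B) - y * T) = x * x + x * y * B + y * y * B * T - y * y * (T * T)" using xy by (simp add: algebra_simps)
    also have "\<dots> = nn" unfolding T2 nn_def by (simp add: algebra_simps)
    finally have prod: "u * ((x + y * B) - y * T) = nn" .
    show "inverse u \<in> ?E"
    proof (cases "nn = 0")
      case False
      define w where "w = (x + y * B) - y * T"
      have w0: "w \<noteq> 0" using prod False unfolding w_def by auto
      have "inverse u = w / (u * w)" using w0 u0 by (simp add: divide_inverse)
      also have "\<dots> = w / nn" using prod unfolding w_def by simp
      also have "\<dots> = (x + y * B) / nn + (- y / nn) * T" unfolding w_def by (simp add: diff_divide_distrib)
      finally have inv_eq: "inverse u = (x + y * B) / nn + (- y / nn) * T" .
      moreover have "nn \<in> R" using xy A B unfolding nn_def by (simp add: Radd Rmul Rdiff)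
      hence r1: "(x + y * B) / nn \<in> R" and r2: "- y / nn \<in> R" using xy B by (simp_all add: Radd Rmul Rdiv Rneg)
      show ?thesis unfolding inv_eq by (rule mem[OF r1 r2])
    next
      case True
      have y0: "y \<noteq> 0"
      proof
        assume "y = 0" hence "x * x = 0" using True unfolding nn_def by simp
        hence "u = 0" using xy \<open>y = 0\<close> by simp
        thus False using u0 by simp
      qed
      define \<rho> where "\<rho> = - x / y"
      have \<rho>R: "\<rho> \<in> R" using xy Rneg Rdiv unfolding \<rho>_def by simp
      have "(y * y) * (\<rho> * \<rho> - B * \<rho> - A) = nn"
      proof -
        have yr: "y * \<rho> = - x" using y0 unfolding \<rho>_def by simp
        have "(y * y) * (\<rho> * \<rho> - B * \<rho> - A) = (y * \<rho>) * (y * \<rho>) - B * y * (y * \<rho>) - y * y * A"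
          by (simp add: algebra_simps)
        also have "\<dots> = nn" unfolding yr nn_def by (simp add: algebra_simps)
        finally show ?thesis .
      qed
      hence r0: "\<rho> * \<rho> - B * \<rho> - A = 0" using True y0 by simp
      have "(T - \<rho>) * (T - (B - \<rho>)) = (T * T - B * T - A) - (\<rho> * \<rho> - B * \<rho> - A)" by (simp add: algebra_simps)
      also have "\<dots> = 0" unfolding r0 T2 by simp
      finally have "T = \<rho> \<or> T = B - \<rho>" by simp
      moreover have "B - \<rho> \<in> R" using Rdiff[OF B \<rho>R] .
      ultimately have "T \<in> R" using \<rho>R by blast
      thus ?thesis using TR by blast
    qed
  qed
qed



locale P13 =
  fixes \<iota> :: "'k::field_char_0 ratfun \<Rightarrow> 'L::field"
    and \<mu> :: "'k ratfun \<Rightarrow> 'L"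
    and \<alpha>0 a b c d e f :: 'k
    and bas :: "'n::finite \<Rightarrow> 'L"
    and lc :: "'n \<Rightarrow> 'k ratfun \<Rightarrow> 'k ratfun"
    and \<beta> :: "'n \<Rightarrow> 'n \<Rightarrow> 'n \<Rightarrow> 'k ratfun"
  assumes closure: "is_alg_closure \<iota>"
    and ad: "a \<noteq> 0 \<or> d \<noteq> 0"
    and h1: "a * e = b * d"
    and h2: "a * f \<noteq> c * d"
    and h3: "b^2 \<noteq> 4 * a * c"
    and h4: "e^2 \<noteq> 4 * d * f"
    and emb: "\<mu> \<in> Emb \<iota>"
    and lam_t: "\<exists>s. s^2 = \<iota> ((rf_const a * rf_t^2 + rf_const b * rf_t + rf_const c)
                            / (rf_const d * rf_t^2 + rf_const e * rf_t + rf_const f))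
                   \<and> \<mu> rf_t = \<iota> (rf_const \<alpha>0) + s"
    and bas_in: "\<forall>i. bas i \<in> composite \<iota> \<mu>"
    and bas_basis: "\<forall>y\<in>composite \<iota> \<mu>. \<exists>!cf :: 'n \<Rightarrow> 'k ratfun. y = (\<Sum>i\<in>UNIV. \<iota> (cf i) * bas i)"
    and lc_def: "\<forall>x. \<mu> x = (\<Sum>i\<in>UNIV. \<iota> (lc i x) * bas i)"
    and \<beta>_def: "\<forall>i j. bas i * bas j = (\<Sum>k\<in>UNIV. \<iota> (\<beta> i j k) * bas k)"
begin

definition "Nk = rf_const a * rf_t^2 + rf_const b * rf_t + rf_const c"
definition "Dk = rf_const d * rf_t^2 + rf_const e * rf_t + rf_const f"
definition "q = Nk / Dk"
definition "s = \<mu> rf_t - \<iota> (rf_const \<alpha>0)"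
definition "T = \<iota> rf_t"
definition "E = {x + y * s | x y. x \<in> range \<iota> \<and> y \<in> range \<iota>}"
definition "M = {x + y * T | x y. x \<in> range \<mu> \<and> y \<in> range \<mu>}"
definition "C = composite \<iota> \<mu>"

lemma iH: "is_ring_hom \<iota>" using closure unfolding is_alg_closure_def by blast
lemma mH: "is_ring_hom \<mu>" using emb unfolding Emb_def by blast

lemma mu_const: "\<mu> (rf_const x) = \<iota> (rf_const x)"
proof -
  have "\<mu> (rf_const x * 1) = \<iota> (rf_const x) * \<mu> 1" using emb unfolding Emb_def by blast
  thus ?thesis using hom_1[OF mH] by simp
qed

lemma a0: "a \<noteq> 0" and d0: "d \<noteq> 0"
proof -
  show "a \<noteq> 0"
  proof
    assume "a = 0"
    hence "b * d = 0" "d \<noteq> 0" using h1 ad by auto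
    hence "b = 0" by simp
    thus False using h3 \<open>a = 0\<close> by simp
  qed
  show "d \<noteq> 0"
  proof
    assume "d = 0"
    hence "a * e = 0" "a \<noteq> 0" using h1 ad by auto
    hence "e = 0" by simp
    thus False using h4 \<open>d = 0\<close> by simp
  qed
qed

lemma Nk_Fract: "Nk = Fract [:c,b,a:] 1"
  unfolding Nk_def rf_const_def rf_t_def by (simp add: power2_eq_square mult_fract add_fract)
lemma Dk_Fract: "Dk = Fract [:f,e,d:] 1"
  unfolding Dk_def rf_const_def rf_t_def by (simp add: power2_eq_square mult_fract add_fract)
lemma q_Fract: "q = Fract [:c,b,a:] [:f,e,d:]"
  unfolding q_def Nk_Fract Dk_Fract by simp
lemma Dk0: "Dk \<noteq> 0" and Nk0: "Nk \<noteq> 0" and q0: "q \<noteq> 0"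
  using a0 d0 by (simp_all add: Nk_Fract Dk_Fract q_Fract Zero_fract_def eq_fract)

lemma fract_rep: "\<exists>P Q. Q \<noteq> 0 \<and> bez P Q \<and> r = Fract P Q"
proof -
  obtain P0 Q0 where r: "r = Fract P0 Q0" "Q0 \<noteq> 0" by (cases r) auto
  then obtain g P Q where g: "P0 = g * P" "Q0 = g * Q" "bez P Q" using bez_exists by blast
  have "g \<noteq> 0" "Q \<noteq> 0" using g r by auto
  hence "Fract P0 Q0 = Fract P Q" using g by (simp add: eq_fract)
  thus ?thesis using r g \<open>Q \<noteq> 0\<close> by auto
qed

lemma no_sqrt: "r^2 \<noteq> q"
proof
  assume rq: "r^2 = q"
  obtain P Q where PQ: "Q \<noteq> 0" "bez P Q" "r = Fract P Q" using fract_rep by blast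
  have "Fract (P * P) (Q * Q) = Fract [:c,b,a:] [:f,e,d:]" using rq PQ by (simp add: q_Fract power2_eq_square)
  hence "P * P * [:f,e,d:] = [:c,b,a:] * (Q * Q)" using PQ d0 by (simp add: eq_fract)
  thus False using not_square_poly[OF a0 d0 h2 h3 PQ(2) PQ(1)] by simp
qed

lemma s_sq: "s^2 = \<iota> q"
  using lam_t unfolding s_def q_def Nk_def Dk_def by auto

lemma s_notin: "s \<notin> range \<iota>"
proof
  assume "s \<in> range \<iota>"
  then obtain x where "s = \<iota> x" by blast
  hence "\<iota> (x^2) = \<iota> q" using s_sq hom_power[OF iH] by simp
  hence "x^2 = q" using hom_inj[OF iH] by simp
  thus False using no_sqrt by simp
qed

lemma s_mu: "s = \<mu> (rf_t - rf_const \<alpha>0)"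
  unfolding s_def by (simp add: hom_diff[OF mH] mu_const)

lemma T_notin: "T \<notin> range \<mu>"
proof
  assume "T \<in> range \<mu>"
  then obtain r where Tr: "T = \<mu> r" by blast
  define Nr where "Nr = rf_const a * r^2 + rf_const b * r + rf_const c"
  define Dr where "Dr = rf_const d * r^2 + rf_const e * r + rf_const f"
  define \<sigma> where "\<sigma> = rf_t - rf_const \<alpha>0"
  have iN: "\<iota> Nk = \<mu> Nr" unfolding Nk_def Nr_def using Tr[unfolded T_def]
    by (simp add: hom_add[OF iH] hom_mult[OF iH] hom_power[OF iH] hom_add[OF mH] hom_mult[OF mH] hom_power[OF mH] mu_const)
  have iD: "\<iota> Dk = \<mu> Dr" unfolding Dk_def Dr_def using Tr[unfolded T_def]
    by (simp add: hom_add[OF iH] hom_mult[OF iH] hom_power[OF iH] hom_add[OF mH] hom_mult[OF mH] hom_power[OF mH] mu_const)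
  have "\<mu> (\<sigma>^2) = \<mu> (Nr / Dr)"
    using s_sq unfolding s_mu q_def \<sigma>_def[symmetric]
    by (simp add: hom_power[OF mH] hom_divide[OF mH] hom_divide[OF iH] iN iD)
  hence sig: "\<sigma>^2 = Nr / Dr" using hom_inj[OF mH] by simp
  obtain P Q where PQ: "Q \<noteq> 0" "bez P Q" "r = Fract P Q" using fract_rep by blast
  define Nt where "Nt = smult a (P * P) + smult b (P * Q) + smult c (Q * Q)"
  define Dt where "Dt = smult d (P * P) + smult e (P * Q) + smult f (Q * Q)"
  have QQ: "Q * Q \<noteq> 0" using PQ by simp
  have NrF: "Nr = Fract Nt (Q * Q)" unfolding Nr_def Nt_def PQ(3) rf_const_def using PQ(1)
    by (simp add: power2_eq_square mult_fract add_fract eq_fract algebra_simps)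
  have DrF: "Dr = Fract Dt (Q * Q)" unfolding Dr_def Dt_def PQ(3) rf_const_def using PQ(1)
    by (simp add: power2_eq_square mult_fract add_fract eq_fract algebra_simps)
  have sigF: "\<sigma>^2 = Fract [:\<alpha>0 * \<alpha>0, - (2 * \<alpha>0), 1:] 1"
    unfolding \<sigma>_def rf_const_def rf_t_def by (simp add: power2_eq_square mult_fract add_fract algebra_simps)
  show False
  proof (cases "Dt = 0")
    case True
    hence "Dr = 0" using DrF by (simp add: Zero_fract_def eq_fract)
    hence "\<sigma>^2 = 0" using sig by simp
    hence "Fract [:\<alpha>0 * \<alpha>0, - (2 * \<alpha>0), 1:] 1 = Fract 0 1" using sigF by (metis Zero_fract_def)
    thus False by (simp add: eq_fract)
  next
    case False
    have "Fract [:\<alpha>0 * \<alpha>0, - (2 * \<alpha>0), 1:] 1 = Fract (Nt * (Q * Q)) ((Q * Q) * Dt)"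
      using sig sigF NrF DrF by simp
    hence "[:\<alpha>0 * \<alpha>0, - (2 * \<alpha>0), 1:] * ((Q * Q) * Dt) = Nt * (Q * Q)"
      using False QQ by (simp add: eq_fract)
    hence "(Q * Q) * ([:\<alpha>0 * \<alpha>0, - (2 * \<alpha>0), 1:] * Dt) = (Q * Q) * Nt" by (simp add: algebra_simps)
    hence "Nt = [:\<alpha>0 * \<alpha>0, - (2 * \<alpha>0), 1:] * Dt" using QQ by simp
    thus False using not_param_poly[OF a0 d0 h1 h2 PQ(2) PQ(1)] unfolding Nt_def Dt_def by blast
  qed
qed


lemma iR: "is_subfield (range \<iota>)" by (rule subfield_range[OF iH])
lemma mR: "is_subfield (range \<mu>)" by (rule subfield_range[OF mH])

lemma zero_iR: "0 \<in> range \<iota>" using iR unfolding is_subfield_def by blast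
lemma one_iR: "1 \<in> range \<iota>" using iR unfolding is_subfield_def by blast
lemma zero_mR: "0 \<in> range \<mu>" using mR unfolding is_subfield_def by blast
lemma one_mR: "1 \<in> range \<mu>" using mR unfolding is_subfield_def by blast
lemma s_ss: "s * s = \<iota> q + 0 * s" using s_sq by (simp add: power2_eq_square)
lemma E_sf: "is_subfield E"
  unfolding E_def by (rule quad_ext(1)[OF iR rangeI zero_iR s_ss s_notin])
lemma E_uniq: "\<lbrakk>x \<in> range \<iota>; y \<in> range \<iota>; x' \<in> range \<iota>; y' \<in> range \<iota>; x + y * s = x' + y' * s\<rbrakk> \<Longrightarrow> x = x' \<and> y = y'"
  by (rule quad_ext(2)[OF iR rangeI zero_iR s_ss s_notin])

definition "\<sigma> = rf_t - rf_const \<alpha>0"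
definition "L0k = rf_const a - \<sigma>^2 * rf_const d"
definition "A2 = \<mu> ((\<sigma>^2 * rf_const f - rf_const c) / L0k)"
definition "B2 = \<mu> ((\<sigma>^2 * rf_const e - rf_const b) / L0k)"

lemma L00: "\<mu> L0k \<noteq> 0"
proof
  assume "\<mu> L0k = 0"
  hence e1: "\<iota> (rf_const a) = s^2 * \<iota> (rf_const d)"
    unfolding L0k_def s_mu \<sigma>_def[symmetric] by (simp add: hom_diff[OF mH] hom_mult[OF mH] hom_power[OF mH] mu_const)
  have "\<iota> (rf_const d) \<noteq> 0" using d0 hom_eq0[OF iH] by (simp add: rf_const_def Zero_fract_def eq_fract)
  hence "\<iota> q = \<iota> (rf_const a / rf_const d)" using e1 s_sq by (simp add: hom_divide[OF iH])
  hence "q = rf_const a / rf_const d" using hom_inj[OF iH] by simp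
  hence "Fract [:c,b,a:] [:f,e,d:] = Fract [:a:] [:d:]" by (simp add: q_Fract rf_const_def)
  hence "[:c,b,a:] * [:d:] = [:a:] * [:f,e,d:]" using a0 d0 by (simp add: eq_fract)
  hence "c * d = a * f" by (simp add: algebra_simps)
  thus False using h2 by simp
qed

lemma lin_aux:
  fixes S T a' b' c' d' e' f' :: "'a::field"
  assumes "S * (d' * T^2 + e' * T + f') = a' * T^2 + b' * T + c'"
  shows "S * f' - c' + (S * e' - b') * T = (a' - S * d') * (T * T)"
proof -
  have "(a' - S * d') * (T * T) - (S * f' - c' + (S * e' - b') * T) = (a' * T^2 + b' * T + c') - S * (d' * T^2 + e' * T + f')"
    by (simp add: algebra_simps power2_eq_square)
  thus ?thesis using assms by simp
qed

lemma T_quad: "T * T = A2 + B2 * T"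
proof -
  have iDk: "\<iota> Dk \<noteq> 0" using Dk0 hom_eq0[OF iH] by simp
  have "s^2 * \<iota> Dk = \<iota> Nk" using s_sq iDk unfolding q_def by (simp add: hom_divide[OF iH])
  hence e: "(\<mu> \<sigma>)^2 * (\<mu> (rf_const d) * T^2 + \<mu> (rf_const e) * T + \<mu> (rf_const f))
      = \<mu> (rf_const a) * T^2 + \<mu> (rf_const b) * T + \<mu> (rf_const c)"
    unfolding s_mu \<sigma>_def[symmetric] Nk_def Dk_def T_def
    by (simp add: hom_add[OF iH] hom_mult[OF iH] hom_power[OF iH] mu_const)
  have "\<mu> L0k * (T * T) = \<mu> L0k * (A2 + B2 * T)"
  proof -
    have "\<mu> L0k * (A2 + B2 * T) = \<mu> (\<sigma>^2 * rf_const f - rf_const c) + \<mu> (\<sigma>^2 * rf_const e - rf_const b) * T"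
      using L00 unfolding A2_def B2_def by (simp add: hom_divide[OF mH] field_simps)
    also have "\<dots> = \<mu> L0k * (T * T)"
      unfolding L0k_def hom_diff[OF mH] hom_mult[OF mH] hom_power[OF mH]
      by (rule lin_aux[OF e])
    finally show ?thesis by (rule sym)
  qed
  thus ?thesis using L00 by (metis mult_left_cancel)
qed

lemma A2R: "A2 \<in> range \<mu>" and B2R: "B2 \<in> range \<mu>" unfolding A2_def B2_def by auto

lemma M_sf: "is_subfield M"
  unfolding M_def by (rule quad_ext(1)[OF mR A2R B2R T_quad T_notin])
lemma M_uniq: "\<lbrakk>x \<in> range \<mu>; y \<in> range \<mu>; x' \<in> range \<mu>; y' \<in> range \<mu>; x + y * T = x' + y' * T\<rbrakk> \<Longrightarrow> x = x' \<and> y = y'"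
  by (rule quad_ext(2)[OF mR A2R B2R T_quad T_notin])

lemma C_min: "is_subfield F \<Longrightarrow> range \<iota> \<subseteq> F \<Longrightarrow> range \<mu> \<subseteq> F \<Longrightarrow> C \<subseteq> F"
  unfolding C_def composite_def by blast
lemma C_sf: "is_subfield C"
  unfolding is_subfield_def
proof (intro conjI ballI impI)
  show "0 \<in> C" "1 \<in> C" unfolding C_def composite_def is_subfield_def by auto
  fix x y assume "x \<in> C" "y \<in> C"
  thus "x + y \<in> C" "x * y \<in> C" unfolding C_def composite_def is_subfield_def by auto
next
  fix x assume "x \<in> C"
  thus "- x \<in> C" unfolding C_def composite_def is_subfield_def by auto
next
  fix x assume "x \<in> C" "x \<noteq> 0"
  thus "inverse x \<in> C" unfolding C_def composite_def is_subfield_def by auto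
qed
lemma Cadd: "u \<in> C \<Longrightarrow> v \<in> C \<Longrightarrow> u + v \<in> C" and Cmul: "u \<in> C \<Longrightarrow> v \<in> C \<Longrightarrow> u * v \<in> C"
  using C_sf unfolding is_subfield_def by auto
lemma iC: "range \<iota> \<subseteq> C" and mC: "range \<mu> \<subseteq> C"
  unfolding C_def composite_def by auto

lemma sC: "s \<in> C"
  unfolding s_def using iC mC by (intro subfield_diff[OF C_sf]) auto
lemma TC: "T \<in> C" unfolding T_def using iC by auto

lemma E_mem: "x \<in> range \<iota> \<Longrightarrow> y \<in> range \<iota> \<Longrightarrow> x + y * s \<in> E" unfolding E_def by blast
lemma M_mem: "x \<in> range \<mu> \<Longrightarrow> y \<in> range \<mu> \<Longrightarrow> x + y * T \<in> M" unfolding M_def by blast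


lemma C_E: "C = E"
proof
  show "E \<subseteq> C"
  proof
    fix z assume "z \<in> E"
    then obtain x y where "z = x + y * s" "x \<in> range \<iota>" "y \<in> range \<iota>" unfolding E_def by blast
    thus "z \<in> C" using iC sC by (simp add: Cadd Cmul subsetD)
  qed
  have iE: "range \<iota> \<subseteq> E" using E_mem[OF _ zero_iR] by auto
  have "\<mu> x \<in> E" for x
  proof (rule hom_in_subfield[OF mH E_sf])
    show "\<mu> (rf_const c) \<in> E" for c using iE mu_const by auto
    have "\<mu> rf_t = \<iota> (rf_const \<alpha>0) + 1 * s" unfolding s_def by simp
    thus "\<mu> rf_t \<in> E" using E_mem[OF _ one_iR] by auto
  qed
  thus "C \<subseteq> E" using C_min[OF E_sf iE] by blast
qed

lemma C_M: "C = M"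
proof
  show "M \<subseteq> C"
  proof
    fix z assume "z \<in> M"
    then obtain x y where "z = x + y * T" "x \<in> range \<mu>" "y \<in> range \<mu>" unfolding M_def by blast
    thus "z \<in> C" using mC TC by (simp add: Cadd Cmul subsetD)
  qed
  have mM: "range \<mu> \<subseteq> M" using M_mem[OF _ zero_mR] by auto
  have "\<iota> x \<in> M" for x
  proof (rule hom_in_subfield[OF iH M_sf])
    show "\<iota> (rf_const c) \<in> M" for c using mM mu_const by (metis rangeI subsetD)
    have "\<iota> rf_t = 0 + 1 * T" unfolding T_def by simp
    thus "\<iota> rf_t \<in> M" using M_mem[OF zero_mR one_mR] by simp
  qed
  hence "range \<iota> \<subseteq> M" by blast
  thus "C \<subseteq> M" using C_min[OF M_sf _ mM] by blast
qed

end


context P13 begin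

lemma E_rep: "y \<in> C \<Longrightarrow> \<exists>x z. y = \<iota> x + \<iota> z * s"
  unfolding C_E E_def by blast

lemma E_inj: "\<iota> x + \<iota> z * s = \<iota> x' + \<iota> z' * s \<Longrightarrow> x = x' \<and> z = z'"
  using E_uniq[of "\<iota> x" "\<iota> z" "\<iota> x'" "\<iota> z'"] hom_inj[OF iH] by auto

definition "cxz y = (SOME p. y = \<iota> (fst p) + \<iota> (snd p) * s)"
definition "cx y = fst (cxz y)"
definition "cz y = snd (cxz y)"

lemma cxz_rep: "y \<in> C \<Longrightarrow> y = \<iota> (cx y) + \<iota> (cz y) * s"
proof -
  assume "y \<in> C"
  then obtain x z where "y = \<iota> x + \<iota> z * s" using E_rep by blast
  hence "\<exists>p. y = \<iota> (fst p) + \<iota> (snd p) * s" by (metis fst_conv snd_conv)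
  hence "y = \<iota> (fst (cxz y)) + \<iota> (snd (cxz y)) * s" unfolding cxz_def by (rule someI_ex)
  thus ?thesis unfolding cx_def cz_def .
qed

lemma sE: "\<iota> x + \<iota> z * s \<in> C" unfolding C_E E_def by blast

lemma cx_eq: "cx (\<iota> x + \<iota> z * s) = x" and cz_eq: "cz (\<iota> x + \<iota> z * s) = z"
  using cxz_rep[OF sE, of x z] E_inj by metis+

lemma cx_add: assumes "y \<in> C" "y' \<in> C" shows "cx (y + y') = cx y + cx y'"
proof -
  obtain x1 z1 where y: "y = \<iota> x1 + \<iota> z1 * s" using E_rep assms(1) by blast
  obtain x2 z2 where y': "y' = \<iota> x2 + \<iota> z2 * s" using E_rep assms(2) by blast
  have "y + y' = \<iota> (x1 + x2) + \<iota> (z1 + z2) * s" unfolding y y' by (simp add: hom_add[OF iH] algebra_simps)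
  thus ?thesis unfolding y y' cx_eq by (simp add: cx_eq)
qed

lemma cx_scale: assumes "y \<in> C" shows "cx (\<iota> cc * y) = cc * cx y"
proof -
  obtain x1 z1 where y: "y = \<iota> x1 + \<iota> z1 * s" using E_rep assms(1) by blast
  have "\<iota> cc * y = \<iota> (cc * x1) + \<iota> (cc * z1) * s" unfolding y by (simp add: hom_mult[OF iH] algebra_simps)
  thus ?thesis unfolding y by (simp add: cx_eq)
qed

lemma cx_zero: "cx 0 = 0"
proof -
  have "(0::'L) = \<iota> 0 + \<iota> 0 * s" using hom_0[OF iH] by simp
  thus ?thesis using cx_eq by metis
qed

lemma C_sum: "(\<And>i. i \<in> A \<Longrightarrow> y i \<in> C) \<Longrightarrow> (\<Sum>i\<in>A. y i) \<in> C"
proof (induction A rule: infinite_finite_induct)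
  case (infinite A) thus ?case using C_sf unfolding is_subfield_def by simp
next
  case empty thus ?case using C_sf unfolding is_subfield_def by simp
next
  case (insert x F) thus ?case by (simp add: Cadd)
qed

lemma iCm: "\<iota> x \<in> C" using iC by auto

lemma cx_sum: "(\<And>i. y i \<in> C) \<Longrightarrow> cx (\<Sum>i\<in>A. \<iota> (g i) * y i) = (\<Sum>i\<in>A. g i * cx (y i))"
proof (induction A rule: infinite_finite_induct)
  case (infinite A) thus ?case by (simp add: cx_zero)
next
  case empty thus ?case by (simp add: cx_zero)
next
  case (insert x F)
  have "(\<Sum>i\<in>F. \<iota> (g i) * y i) \<in> C" using insert.prems by (intro C_sum Cmul iCm) auto
  moreover have "\<iota> (g x) * y x \<in> C" using insert.prems by (intro Cmul iCm) auto
  ultimately show ?case using insert by (simp add: cx_add cx_scale)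
qed


lemma cz_add: assumes "y \<in> C" "y' \<in> C" shows "cz (y + y') = cz y + cz y'"
proof -
  obtain x1 z1 where y: "y = \<iota> x1 + \<iota> z1 * s" using E_rep assms(1) by blast
  obtain x2 z2 where y': "y' = \<iota> x2 + \<iota> z2 * s" using E_rep assms(2) by blast
  have "y + y' = \<iota> (x1 + x2) + \<iota> (z1 + z2) * s" unfolding y y' by (simp add: hom_add[OF iH] algebra_simps)
  thus ?thesis unfolding y y' cz_eq by (simp add: cz_eq)
qed

lemma cz_scale: assumes "y \<in> C" shows "cz (\<iota> cc * y) = cc * cz y"
proof -
  obtain x1 z1 where y: "y = \<iota> x1 + \<iota> z1 * s" using E_rep assms(1) by blast
  have "\<iota> cc * y = \<iota> (cc * x1) + \<iota> (cc * z1) * s" unfolding y by (simp add: hom_mult[OF iH] algebra_simps)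
  thus ?thesis unfolding y by (simp add: cz_eq)
qed

definition "Y g = (\<Sum>i\<in>UNIV. \<iota> (g i) * bas i)"
definition "crd y = (THE cf. y = (\<Sum>i\<in>UNIV. \<iota> (cf i) * bas i))"

lemma basC: "bas i \<in> C" using bas_in unfolding C_def by blast
lemma YC: "Y g \<in> C" unfolding Y_def by (intro C_sum Cmul iCm basC)

lemma crd_eq: "crd (Y g) = g"
proof -
  have "\<exists>!cf. Y g = (\<Sum>i\<in>UNIV. \<iota> (cf i) * bas i)" using bas_basis YC unfolding C_def by blast
  thus ?thesis unfolding crd_def by (rule the1_equality) (simp add: Y_def)
qed

lemma crd_rep: "y \<in> C \<Longrightarrow> Y (crd y) = y"
proof -
  assume "y \<in> C"
  hence "\<exists>!cf. y = (\<Sum>i\<in>UNIV. \<iota> (cf i) * bas i)" using bas_basis unfolding C_def by blast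
  hence "y = (\<Sum>i\<in>UNIV. \<iota> (crd y i) * bas i)" unfolding crd_def by (rule theI')
  thus ?thesis unfolding Y_def by simp
qed

lemma Y_inj: "Y g = Y g' \<Longrightarrow> g = g'" using crd_eq by metis


lemma Y_add: "Y (\<lambda>i. g i + h i) = Y g + Y h"
  unfolding Y_def by (simp add: hom_add[OF iH] sum.distrib distrib_right)
lemma Y_scale: "Y (\<lambda>i. x * g i) = \<iota> x * Y g"
  unfolding Y_def by (simp add: hom_mult[OF iH] sum_distrib_left mult.assoc)
lemma Y_lin: "Y (\<lambda>i. x * g i + z * h i) = \<iota> x * Y g + \<iota> z * Y h"
  using Y_add[of "\<lambda>i. x * g i" "\<lambda>i. z * h i"] Y_scale[of x g] Y_scale[of z h] by simp

lemma crd_lin: "y \<in> C \<Longrightarrow> y' \<in> C \<Longrightarrow> crd (\<iota> x * y + \<iota> z * y') = (\<lambda>i. x * crd y i + z * crd y' i)"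
proof -
  assume "y \<in> C" "y' \<in> C"
  hence "\<iota> x * y + \<iota> z * y' = Y (\<lambda>i. x * crd y i + z * crd y' i)" by (simp add: Y_lin crd_rep)
  thus ?thesis by (simp add: crd_eq)
qed

definition "H w = (\<chi> j::2. if j = 1 then cx (Y (($) w)) else cz (Y (($) w)))"


lemma H_lin: "Vector_Spaces.linear (*s) (*s) H"
proof (unfold_locales)
  fix w1 w2 :: "'k ratfun ^ 'n"
  show "H (w1 + w2) = H w1 + H w2"
  proof -
    have "(($) (w1 + w2)) = (\<lambda>i. w1 $ i + w2 $ i)" by auto
    thus ?thesis unfolding H_def using Y_add[of "($) w1" "($) w2"] YC
      by (simp add: vec_eq_iff cx_add cz_add)
  qed
next
  fix x and w :: "'k ratfun ^ 'n"
  show "H (x *s w) = x *s H w"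
  proof -
    have "(($) (x *s w)) = (\<lambda>i. x * w $ i)" by auto
    thus ?thesis unfolding H_def using Y_scale[of x "($) w"] YC
      by (simp add: vec_eq_iff cx_scale cz_scale)
  qed
qed

lemma H_inj: "inj H"
proof (rule injI)
  fix w1 w2 :: "'k ratfun ^ 'n" assume h: "H w1 = H w2"
  have "H w1 $ 1 = H w2 $ 1" "H w1 $ 2 = H w2 $ 2" using h by simp_all
  hence "cx (Y (($) w1)) = cx (Y (($) w2))" "cz (Y (($) w1)) = cz (Y (($) w2))"
    unfolding H_def by simp_all
  hence "Y (($) w1) = Y (($) w2)" using cxz_rep[OF YC] by metis
  hence "(($) w1) = (($) w2)" by (rule Y_inj)
  thus "w1 = w2" by (simp add: vec_eq_iff)
qed

lemma H_surj: "surj H"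
proof -
  have "\<exists>w. H w = u" for u :: "'k ratfun ^ 2"
  proof -
    define y where "y = \<iota> (u $ 1) + \<iota> (u $ 2) * s"
    have "y \<in> C" unfolding y_def by (rule sE)
    define w where "w = (\<chi> i. crd y i)"
    have "(($) w) = crd y" unfolding w_def by auto
    hence "Y (($) w) = y" using crd_rep[OF \<open>y \<in> C\<close>] by simp
    hence "H w = u" unfolding H_def y_def by (simp add: vec_eq_iff cx_eq cz_eq forall_2)
    thus ?thesis by blast
  qed
  thus ?thesis by (metis surjI)
qed

lemma card_n: "CARD('n) = 2"
proof -
  have "vec.dim (H ` UNIV) = vec.dim (UNIV :: ('k ratfun ^ 'n) set)"
    by (rule vec.dim_image_eq[OF H_lin]) (use H_inj in \<open>auto intro: inj_on_subset\<close>)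
  hence "vec.dim (UNIV :: ('k ratfun ^ 2) set) = vec.dim (UNIV :: ('k ratfun ^ 'n) set)"
    using H_surj by simp
  thus ?thesis by (simp add: vec.dim_UNIV card_cart_basis)
qed

end


context P13 begin

lemma bas_mu: "bas j * \<mu> x = (\<Sum>i\<in>UNIV. \<iota> (phi_mat \<beta> lc x $ i $ j) * bas i)"
proof -
  have "bas j * \<mu> x = (\<Sum>k\<in>UNIV. \<iota> (lc k x) * (bas j * bas k))"
    using lc_def by (simp add: sum_distrib_left mult.left_commute)
  also have "\<dots> = (\<Sum>k\<in>UNIV. \<iota> (lc k x) * (\<Sum>i\<in>UNIV. \<iota> (\<beta> j k i) * bas i))"
    using \<beta>_def by simp
  also have "\<dots> = (\<Sum>k\<in>UNIV. \<Sum>i\<in>UNIV. \<iota> (\<beta> j k i * lc k x) * bas i)"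
    by (simp add: sum_distrib_left hom_mult[OF iH] ac_simps)
  also have "\<dots> = (\<Sum>i\<in>UNIV. \<Sum>k\<in>UNIV. \<iota> (\<beta> j k i * lc k x) * bas i)"
    by (rule sum.swap)
  also have "\<dots> = (\<Sum>i\<in>UNIV. \<iota> (phi_mat \<beta> lc x $ i $ j) * bas i)"
    unfolding phi_mat_def by (simp add: hom_sum[OF iH] sum_distrib_right)
  finally show ?thesis .
qed

definition "ee w = \<mu> (w $ (1::2)) + \<mu> (w $ 2) * T"
definition "F w = (\<chi> i. cx (bas i * ee w))"

lemma eeC: "ee w \<in> C" unfolding ee_def C_M by (rule M_mem) auto
lemma beC: "bas i * ee w \<in> C" by (intro Cmul basC eeC)

lemma F_add: "F (w1 + w2) = F w1 + F w2"
proof -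
  have "ee (w1 + w2) = ee w1 + ee w2" unfolding ee_def by (simp add: hom_add[OF mH] algebra_simps)
  thus ?thesis unfolding F_def by (simp add: vec_eq_iff distrib_left cx_add beC)
qed

lemma F_scale: "F (x *s w) = vector_matrix_mult (F w) (phi_mat \<beta> lc x)"
proof -
  have ee: "ee (x *s w) = \<mu> x * ee w" unfolding ee_def by (simp add: hom_mult[OF mH] algebra_simps)
  have "F (x *s w) $ j = vector_matrix_mult (F w) (phi_mat \<beta> lc x) $ j" for j
  proof -
    have "F (x *s w) $ j = cx ((bas j * \<mu> x) * ee w)" unfolding F_def ee by (simp add: mult.assoc)
    also have "\<dots> = cx (\<Sum>i\<in>UNIV. \<iota> (phi_mat \<beta> lc x $ i $ j) * (bas i * ee w))"
      unfolding bas_mu by (simp add: sum_distrib_right mult.assoc)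
    also have "\<dots> = (\<Sum>i\<in>UNIV. phi_mat \<beta> lc x $ i $ j * cx (bas i * ee w))"
      by (rule cx_sum) (rule beC)
    also have "\<dots> = vector_matrix_mult (F w) (phi_mat \<beta> lc x) $ j"
      unfolding vector_matrix_mult_def F_def by (simp add: mult.commute)
    finally show ?thesis .
  qed
  thus ?thesis by (simp add: vec_eq_iff)
qed

lemma cx_mult_ee: assumes F0: "\<forall>i. cx (bas i * ee w) = 0" and yC: "y \<in> C" shows "cx (y * ee w) = 0"
proof -
  have "y * ee w = (\<Sum>i\<in>UNIV. \<iota> (crd y i) * (bas i * ee w))"
    using crd_rep[OF yC] unfolding Y_def by (metis (no_types, lifting) mult.assoc sum.cong sum_distrib_right)
  moreover have "cx (\<Sum>i\<in>UNIV. \<iota> (crd y i) * (bas i * ee w)) = (\<Sum>i\<in>UNIV. crd y i * cx (bas i * ee w))"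
    by (rule cx_sum) (rule beC)
  ultimately have "cx (y * ee w) = (\<Sum>i\<in>UNIV. crd y i * cx (bas i * ee w))" by simp
  thus ?thesis using F0 by simp
qed

lemma F_inj: "inj F"
proof -
  have kern: "w = 0" if F0: "F w = 0" for w
  proof -
    have F0': "\<forall>i. cx (bas i * ee w) = 0" using F0 unfolding F_def by (simp add: vec_eq_iff)
    have c1: "cx (ee w) = 0" using cx_mult_ee[OF F0', of 1] C_sf unfolding is_subfield_def by simp
    have sCm: "s \<in> C" by (rule sC)
    have c2: "cx (s * ee w) = 0" using cx_mult_ee[OF F0' sCm] .
    define z where "z = cz (ee w)"
    have er: "ee w = \<iota> 0 + \<iota> z * s" unfolding z_def using cxz_rep[OF eeC[of w]] c1 by simp
    have "s * ee w = \<iota> z * (s * s)" by (simp add: er hom_0[OF iH] algebra_simps)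
    also have "\<dots> = \<iota> (z * q) + \<iota> 0 * s" using s_sq by (simp add: power2_eq_square hom_mult[OF iH] hom_0[OF iH])
    finally have "s * ee w = \<iota> (z * q) + \<iota> 0 * s" .
    hence "cx (s * ee w) = z * q" by (simp add: cx_eq)
    hence "z * q = 0" using c2 by simp
    hence "z = 0" using q0 by simp
    hence "\<mu> (w $ 1) + \<mu> (w $ 2) * T = 0 + 0 * T" using er unfolding ee_def by (simp add: hom_0[OF iH])
    hence "\<mu> (w $ 1) = 0 \<and> \<mu> (w $ 2) = 0" using M_uniq[OF rangeI rangeI zero_mR zero_mR] by blast
    hence "w $ 1 = 0" "w $ 2 = 0" using hom_eq0[OF mH] by auto
    thus "w = 0" by (simp add: vec_eq_iff forall_2)
  qed
  show ?thesis
  proof (rule injI)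
    fix x y assume "F x = F y"
    moreover have "F x = F (x - y) + F y" using F_add[of "x - y" y] by simp
    ultimately have "F (x - y) = 0" by simp
    thus "x = y" using kern[of "x - y"] by simp
  qed

qed


lemma crd_bas: "crd (bas i) = (\<lambda>j. if j = i then 1 else 0)"
proof -
  have "Y (\<lambda>j. if j = i then 1 else 0) = (\<Sum>j\<in>UNIV. if j = i then bas j else 0)"
    unfolding Y_def by (rule sum.cong) (auto simp: hom_0[OF iH] hom_1[OF iH])
  hence "Y (\<lambda>j. if j = i then 1 else 0) = bas i" by simp
  thus ?thesis using crd_eq by metis
qed

lemma oneC: "1 \<in> C" using C_sf unfolding is_subfield_def by simp

lemma F_surj: "surj F"
proof -
  have "\<exists>w. F w = v" for v :: "'k ratfun ^ 'n"
  proof -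
    define ell where "ell y = (\<Sum>i\<in>UNIV. crd y i * v $ i)" for y
    define A where "A = ell 1"
    define B where "B = ell s / q"
    define e0 where "e0 = \<iota> A + \<iota> B * s"
    have "e0 \<in> M" unfolding e0_def C_M[symmetric] by (rule sE)
    then obtain u1 u2 where u: "e0 = \<mu> u1 + \<mu> u2 * T" unfolding M_def by blast
    define w where "w = (\<chi> j::2. if j = 1 then u1 else u2)"
    have ew: "ee w = e0" unfolding ee_def w_def u by simp
    have "F w $ i = v $ i" for i
    proof -
      define x where "x = cx (bas i)"
      define z where "z = cz (bas i)"
      have bi: "bas i = \<iota> x + \<iota> z * s" unfolding x_def z_def by (rule cxz_rep[OF basC])
      have "bas i * e0 = \<iota> x * \<iota> A + \<iota> z * \<iota> B * (s * s) + (\<iota> x * \<iota> B + \<iota> z * \<iota> A) * s"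
        unfolding bi e0_def by (simp add: algebra_simps)
      also have "\<dots> = \<iota> (x * A + z * B * q) + \<iota> (x * B + z * A) * s"
        using s_sq by (simp add: power2_eq_square hom_mult[OF iH] hom_add[OF iH])
      finally have "cx (bas i * e0) = x * A + z * B * q" by (simp add: cx_eq)
      also have "\<dots> = x * ell 1 + z * ell s" unfolding A_def B_def using q0 by simp
      also have "\<dots> = ell (\<iota> x * 1 + \<iota> z * s)"
        unfolding ell_def crd_lin[OF oneC sC] by (simp add: sum_distrib_left sum.distrib algebra_simps)
      also have "\<dots> = ell (bas i)" using bi by simp
      also have "\<dots> = (\<Sum>j\<in>UNIV. if j = i then v $ j else 0)" unfolding ell_def crd_bas
        by (rule sum.cong) auto
      also have "\<dots> = v $ i" by simp
      finally show ?thesis unfolding F_def ew by simp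
    qed
    hence "F w = v" by (simp add: vec_eq_iff)
    thus ?thesis by blast
  qed
  thus ?thesis by (metis surjI)
qed


definition "rr x u = vector_matrix_mult u (phi_mat \<beta> lc x)"

lemma rrF: "rr x (F w) = F (x *s w)" unfolding rr_def F_scale ..

lemma vs_r: "vector_space rr"
proof -
  have Fs: "\<exists>w. u = F w" for u using F_surj by (metis surj_def)
  have r1: "rr x (u1 + u2) = rr x u1 + rr x u2" for x u1 u2
  proof -
    obtain w1 w2 where "u1 = F w1" "u2 = F w2" using Fs by metis
    thus ?thesis by (simp add: F_add[symmetric] rrF vec.scale_right_distrib)
  qed
  have r2: "rr (x + y) u = rr x u + rr y u" for x y u
  proof -
    obtain w where "u = F w" using Fs by metis
    thus ?thesis by (simp add: F_add[symmetric] rrF vec.scale_left_distrib)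
  qed
  have r3: "rr x (rr y u) = rr (x * y) u" for x y u
  proof -
    obtain w where "u = F w" using Fs by metis
    thus ?thesis by (simp add: rrF)
  qed
  have r4: "rr 1 u = u" for u
  proof -
    obtain w where "u = F w" using Fs by metis
    thus ?thesis by (simp add: rrF)
  qed
  show ?thesis by unfold_locales (simp_all add: r1 r2 r3 r4)
qed

lemma F_lin: "Vector_Spaces.linear (*s) rr F"
proof -
  interpret R: vector_space rr by (rule vs_r)
  show ?thesis by unfold_locales (simp_all add: F_add rrF)
qed

lemma right_dim2: "vector_space.dim rr (UNIV :: ('k ratfun ^ 'n) set) = 2"
proof -
  interpret R: vector_space rr by (rule vs_r)
  interpret P: finite_dimensional_vector_space_pair_1 "(*s)" cart_basis rr
    by unfold_locales
  have "R.dim (F ` UNIV) = vec.dim (UNIV :: ('k ratfun ^ 2) set)"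
    by (rule P.dim_image_eq[OF F_lin]) (use F_inj in \<open>auto intro: inj_on_subset\<close>)
  hence "R.dim UNIV = vec.dim (UNIV :: ('k ratfun ^ 2) set)" using F_surj by simp
  thus ?thesis by (simp add: vec.dim_UNIV card_cart_basis)
qed

lemma left_dim2: "vec.dim (UNIV :: ('k ratfun ^ 'n) set) = 2"
  by (simp add: vec.dim_UNIV card_cart_basis card_n)

end


theorem proposition1p3:
  fixes \<iota> :: "'k::field_char_0 ratfun \<Rightarrow> 'L::field"
    and \<mu> :: "'k ratfun \<Rightarrow> 'L"
    and \<alpha>0 a b c d e f :: 'k
    and bas :: "'n::finite \<Rightarrow> 'L"
    and lc :: "'n \<Rightarrow> 'k ratfun \<Rightarrow> 'k ratfun"
    and \<beta> :: "'n \<Rightarrow> 'n \<Rightarrow> 'n \<Rightarrow> 'k ratfun"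
  assumes closure: "is_alg_closure \<iota>"
    and ad: "a \<noteq> 0 \<or> d \<noteq> 0"
    and h1: "a * e = b * d"
    and h2: "a * f \<noteq> c * d"
    and h3: "b^2 \<noteq> 4 * a * c"
    and h4: "e^2 \<noteq> 4 * d * f"
    and emb: "\<mu> \<in> Emb \<iota>"
    and lam_t: "\<exists>s. s^2 = \<iota> ((rf_const a * rf_t^2 + rf_const b * rf_t + rf_const c)
                            / (rf_const d * rf_t^2 + rf_const e * rf_t + rf_const f))
                   \<and> \<mu> rf_t = \<iota> (rf_const \<alpha>0) + s"
    and card_orbit: "CARD('n) = card (orbit \<iota> \<mu>)"
    and bas_in: "\<forall>i. bas i \<in> composite \<iota> \<mu>"
    and bas_basis: "\<forall>y\<in>composite \<iota> \<mu>. \<exists>!cf :: 'n \<Rightarrow> 'k ratfun. y = (\<Sum>i\<in>UNIV. \<iota> (cf i) * bas i)"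
    and lc_def: "\<forall>x. \<mu> x = (\<Sum>i\<in>UNIV. \<iota> (lc i x) * bas i)"
    and \<beta>_def: "\<forall>i j. bas i * bas j = (\<Sum>k\<in>UNIV. \<iota> (\<beta> i j k) * bas k)"
  shows "left_dim (phi_mat \<beta> lc) = 2 \<and> right_dim (phi_mat \<beta> lc) = 2"
proof -
  interpret P: P13 \<iota> \<mu> \<alpha>0 a b c d e f bas lc \<beta>
    by unfold_locales (fact closure ad h1 h2 h3 h4 emb lam_t bas_in bas_basis lc_def \<beta>_def)+
  have rr: "P.rr = (\<lambda>x v. vector_matrix_mult v (phi_mat \<beta> lc x))" by (intro ext) (simp add: P.rr_def)
  show ?thesis unfolding left_dim_def right_dim_def using P.left_dim2 P.right_dim2 unfolding rr by simp
qed

end
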